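(* Let $G=(V,E)$ be an event graph and let $\mathcal C$ be the unique sink component of $\mathrm{dec}(G)$. For every $v\in V$ and every $X\subseteq\mathcal U_{|V}$, the node $(v,X)$ belongs to $\mathcal C$ if and only if there exists a closed walk $W$ in $G$ such that (1) $W$ starts and ends at $v$; (2) for each $x\in\mathcal U_{|V}$, $W$ contains at least one node labeled $\mathtt{i}x$ or $\mathtt{d}x$; (3) for each $x\in\mathcal U_{|V}$, $x\in X$ if and only if the last node of $W$ whose label refers to $x$ is labeled $\mathtt{i}x$ (equivalently, $x\notin X$ iff that last node is labeled $\mathtt{d}x$).
   Context: An event graph is a finite, connected, undirected graph $G=(V,E)$, with $n=|V|$, in which every node $v$ carries a label that is either $\mathtt{i}x_v$ (insertion of $x_v$) or $\mathtt{d}x_v$ (deletion of $x_v$), where $x_v$ is an element of a finite universe $\mathcal U$. Write $\mathcal U_{|V}=\{x_v : v\in V\}$. It is assumed that for each $x\in\mathcal U_{|V}$ at least one node is labeled $\mathtt{i}x$ and at least one node is labeled $\mathtt{d}x$. The decorated graph $\mathrm{dec}(G)$ is the directed graph with vertex set $V\times 2^{\mathcal U_{|V}}$ in which $((u,X),(v,Y))$ is an edge if and only if $\{u,v\}\in E$ and $Y=X\cup\{x_v\}$ when $v$ is labeled $\mathtt{i}x_v$, respectively $Y=X\setminus\{x_v\}$ when $v$ is labeled $\mathtt{d}x_v$. A sink component of $\mathrm{dec}(G)$ is a strongly connected component of $\mathrm{dec}(G)$ from which no edge leads to a different strongly connected component; $\mathrm{dec}(G)$ has exactly one sink component, denoted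 $\mathcal C$. A walk in a graph is a finite sequence of nodes in which each node is joined by an edge to its successor (nodes may repeat); it is closed if its first and last nodes coincide. *)

theory Defs
  imports Main
begin

text \<open>An event graph: vertex set V, undirected edges E given as 2-element sets of
vertices, and a labeling: ins v is True iff v is labeled i x_v (insertion), False iff
labeled d x_v (deletion); elem v = x_v.\<close>

definition is_walk :: "'v set set \<Rightarrow> 'v list \<Rightarrow> bool" where
  "is_walk E W \<longleftrightarrow> W \<noteq> [] \<and>
     (\<forall>i. Suc i < length W \<longrightarrow> {W ! i, W ! Suc i} \<in> E)"

definition event_graph :: "'v set \<Rightarrow> 'v set set \<Rightarrow> ('v \<Rightarrow> bool) \<Rightarrow> ('v \<Rightarrow> 'u) \<Rightarrow> bool" where
  "event_graph V E ins elem \<longleftrightarrow>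
     finite V \<and> V \<noteq> {} \<and>
     (\<forall>e\<in>E. e \<subseteq> V \<and> card e = 2) \<and>
     (\<forall>u\<in>V. \<forall>v\<in>V. \<exists>W. is_walk E W \<and> hd W = u \<and> last W = v) \<and>
     (\<forall>x\<in>elem ` V. (\<exists>v\<in>V. elem v = x \<and> ins v) \<and> (\<exists>v\<in>V. elem v = x \<and> \<not> ins v))"

definition dec_vertices :: "'v set \<Rightarrow> ('v \<Rightarrow> 'u) \<Rightarrow> ('v \<times> 'u set) set" where
  "dec_vertices V elem = V \<times> Pow (elem ` V)"

definition dec_edges :: "'v set \<Rightarrow> 'v set set \<Rightarrow> ('v \<Rightarrow> bool) \<Rightarrow> ('v \<Rightarrow> 'u)
    \<Rightarrow> (('v \<times> 'u set) \<times> ('v \<times> 'u set)) set" where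
  "dec_edges V E ins elem =
     {((u, X), (v, Y)). (u, X) \<in> dec_vertices V elem \<and> (v, Y) \<in> dec_vertices V elem \<and>
        {u, v} \<in> E \<and> Y = (if ins v then X \<union> {elem v} else X - {elem v})}"

definition is_scc :: "'a set \<Rightarrow> ('a \<times> 'a) set \<Rightarrow> 'a set \<Rightarrow> bool" where
  "is_scc N D C \<longleftrightarrow> C \<subseteq> N \<and> C \<noteq> {} \<and>
     (\<forall>a\<in>C. \<forall>b\<in>C. (a, b) \<in> D\<^sup>*) \<and>
     (\<forall>a\<in>C. \<forall>b\<in>N. (a, b) \<in> D\<^sup>* \<and> (b, a) \<in> D\<^sup>* \<longrightarrow> b \<in> C)"

definition is_sink_component :: "'a set \<Rightarrow> ('a \<times> 'a) set \<Rightarrow> 'a set \<Rightarrow> bool" where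
  "is_sink_component N D C \<longleftrightarrow> is_scc N D C \<and> (\<forall>a\<in>C. \<forall>b. (a, b) \<in> D \<longrightarrow> b \<in> C)"

end

theory Submission imports Defs begin

lemma is_walk_single[simp]: "is_walk E [a]"
  by (simp add: is_walk_def)

lemma is_walk_snoc:
  assumes "W \<noteq> []"
  shows "is_walk E (W @ [a]) \<longleftrightarrow> is_walk E W \<and> {last W, a} \<in> E"
proof
  assume h: "is_walk E (W @ [a])"
  have "is_walk E W" unfolding is_walk_def
  proof (intro conjI allI impI)
    show "W \<noteq> []" by fact
    fix i assume "Suc i < length W"
    then have "Suc i < length (W @ [a])" by simp
    with h have "{(W @ [a]) ! i, (W @ [a]) ! Suc i} \<in> E" unfolding is_walk_def by blast
    then show "{W ! i, W ! Suc i} \<in> E" using \<open>Suc i < length W\<close> by (simp add: nth_append)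
  qed
  moreover have "{last W, a} \<in> E"
  proof -
    from assms obtain n where n: "length W = Suc n" by (cases W) auto
    from h have "{(W@[a]) ! n, (W@[a]) ! Suc n} \<in> E" unfolding is_walk_def using n by simp
    then show ?thesis using n assms by (simp add: nth_append last_conv_nth)
  qed
  ultimately show "is_walk E W \<and> {last W, a} \<in> E" by simp
next
  assume h: "is_walk E W \<and> {last W, a} \<in> E"
  show "is_walk E (W @ [a])" unfolding is_walk_def
  proof (intro conjI allI impI)
    show "W @ [a] \<noteq> []" by simp
    fix i assume i: "Suc i < length (W @ [a])"
    show "{(W @ [a]) ! i, (W @ [a]) ! Suc i} \<in> E"
    proof (cases "Suc i < length W")
      case True then show ?thesis using h unfolding is_walk_def by (simp add: nth_append)
    next
      case False
      then have "Suc i = length W" using i by simp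
      then have "i = length W - 1" by simp
      then show ?thesis using h assms \<open>Suc i = length W\<close> by (simp add: nth_append last_conv_nth)
    qed
  qed
qed

lemma is_walk_nonempty: "is_walk E W \<Longrightarrow> W \<noteq> []" by (simp add: is_walk_def)

lemma is_walk_app:
  assumes "is_walk E A" "is_walk E B" "last A = hd B"
  shows "is_walk E (A @ tl B)"
  using assms(2,3)
proof (induction B rule: rev_induct)
  case Nil then show ?case by (simp add: is_walk_def)
next
  case (snoc b B)
  have nA: "A \<noteq> []" using assms(1) is_walk_nonempty by blast
  show ?case
  proof (cases "B = []")
    case True then show ?thesis using snoc assms(1) by simp
  next
    case False
    then have wB: "is_walk E B" and e: "{last B, b} \<in> E" using snoc.prems(1) is_walk_snoc[OF False] by simp_all
    have hB: "hd B = last A" using snoc.prems False by simp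
    then have IH: "is_walk E (A @ tl B)" using snoc.IH wB by simp
    have lB: "last (A @ tl B) = last B"
    proof (cases "tl B = []")
      case True
      then have "B = [hd B]" using False by (metis list.collapse)
      then show ?thesis using True hB by (metis append.right_neutral last_ConsL)
    next
      case F2: False
      then have "last (A @ tl B) = last (tl B)" by simp
      also have "\<dots> = last B" using F2 False by (metis last_tl)
      finally show ?thesis .
    qed
    have tl: "tl (B @ [b]) = tl B @ [b]" using False by simp
    have "is_walk E ((A @ tl B) @ [b])" using is_walk_snoc[of "A @ tl B" E b] IH e lB nA by simp
    then show ?thesis using tl by simp
  qed
qed

lemma is_walk_set:
  assumes "is_walk E W" "hd W \<in> V" "\<forall>e\<in>E. e \<subseteq> V"
  shows "set W \<subseteq> V"
  using assms
proof (induction W rule: rev_induct)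
  case Nil then show ?case by simp
next
  case (snoc a W)
  show ?case
  proof (cases "W = []")
    case True then show ?thesis using snoc by simp
  next
    case False
    then have "is_walk E W" "{last W, a} \<in> E" using snoc.prems(1) is_walk_snoc[OF False] by simp_all
    then show ?thesis using snoc False by auto
  qed
qed


definition stp :: "('v \<Rightarrow> bool) \<Rightarrow> ('v \<Rightarrow> 'u) \<Rightarrow> 'u set \<Rightarrow> 'v \<Rightarrow> 'u set" where
  "stp ins elem Y w = (if ins w then Y \<union> {elem w} else Y - {elem w})"

definition covered where "covered elem W x \<longleftrightarrow> (\<exists>i<length W. elem (W ! i) = x)"
definition lastins where "lastins ins elem W x \<longleftrightarrow> (\<exists>i<length W. elem (W ! i) = x \<and> ins (W ! i) \<and>
             (\<forall>j. i < j \<and> j < length W \<longrightarrow> elem (W ! j) \<noteq> x))"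

lemma covered_snoc: "covered elem (W @ [a]) x \<longleftrightarrow> covered elem W x \<or> elem a = x"
proof -
  have "(\<exists>i<length (W @ [a]). elem ((W @ [a]) ! i) = x) \<longleftrightarrow>
        (\<exists>i<length W. elem ((W @ [a]) ! i) = x) \<or> elem ((W @ [a]) ! length W) = x"
    by (auto simp: less_Suc_eq)
  then show ?thesis unfolding covered_def by (simp add: nth_append cong: conj_cong)
qed

lemma lastins_snoc: "lastins ins elem (W @ [a]) x \<longleftrightarrow> (if elem a = x then ins a else lastins ins elem W x)"
proof (cases "elem a = x")
  case True
  show ?thesis
  proof
    assume "lastins ins elem (W @ [a]) x"
    then obtain i where i: "i < Suc (length W)" "elem ((W@[a]) ! i) = x" "ins ((W@[a]) ! i)"
      "\<forall>j. i < j \<and> j < Suc (length W) \<longrightarrow> elem ((W@[a]) ! j) \<noteq> x"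
      unfolding lastins_def by auto
    have "i = length W" using i(4) True by (metis i(1) less_SucE nth_append_length lessI)
    then show "if elem a = x then ins a else lastins ins elem W x" using i True by simp
  next
    assume "if elem a = x then ins a else lastins ins elem W x"
    then show "lastins ins elem (W @ [a]) x" using True unfolding lastins_def
      by (intro exI[of _ "length W"]) auto
  qed
next
  case False
  show ?thesis
  proof
    assume "lastins ins elem (W @ [a]) x"
    then obtain i where i: "i < Suc (length W)" "elem ((W@[a]) ! i) = x" "ins ((W@[a]) ! i)"
      "\<forall>j. i < j \<and> j < Suc (length W) \<longrightarrow> elem ((W@[a]) ! j) \<noteq> x"
      unfolding lastins_def by auto
    have "i < length W" using i(1,2) False by (metis less_SucE nth_append_length)
    have "\<forall>j. i < j \<and> j < length W \<longrightarrow> elem (W ! j) \<noteq> x"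
      using i(4) by (auto simp: nth_append)
    then show "if elem a = x then ins a else lastins ins elem W x" using i False \<open>i < length W\<close>
      unfolding lastins_def by (auto simp: nth_append)
  next
    assume "if elem a = x then ins a else lastins ins elem W x"
    then obtain i where i: "i < length W" "elem (W ! i) = x" "ins (W ! i)"
      "\<forall>j. i < j \<and> j < length W \<longrightarrow> elem (W ! j) \<noteq> x"
      using False unfolding lastins_def by auto
    show "lastins ins elem (W @ [a]) x" unfolding lastins_def
      apply (intro exI[of _ i])
      using i False by (auto simp: nth_append less_Suc_eq)
  qed
qed

lemma run_char:
  assumes "elem w \<in> Y \<longleftrightarrow> ins w"
  shows "x \<in> foldl (stp ins elem) Y ws \<longleftrightarrow>
     (if covered elem (w # ws) x then lastins ins elem (w # ws) x else x \<in> Y)"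
proof (induction ws rule: rev_induct)
  case Nil
  then show ?case using assms by (auto simp: covered_def lastins_def)
next
  case (snoc a ws)
  show ?case using snoc covered_snoc[of elem "w#ws" a x] lastins_snoc[of ins elem "w#ws" a x]
    by (auto simp: stp_def)
qed


lemma foldl_sub: "set ws \<subseteq> V \<Longrightarrow> Y \<subseteq> elem ` V \<Longrightarrow> foldl (stp ins elem) Y ws \<subseteq> elem ` V"
proof (induction ws arbitrary: Y)
  case (Cons a ws)
  have "stp ins elem Y a \<subseteq> elem ` V" using Cons.prems by (auto simp: stp_def)
  then show ?case using Cons by simp
qed simp

lemma sim:
  assumes "is_walk E W" "hd W \<in> V" "Y \<subseteq> elem ` V" "\<forall>e\<in>E. e \<subseteq> V"
  shows "((hd W, Y), (last W, foldl (stp ins elem) Y (tl W))) \<in> (dec_edges V E ins elem)\<^sup>*"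
  using assms(1,2)
proof (induction W rule: rev_induct)
  case Nil then show ?case by (simp add: is_walk_def)
next
  case (snoc a W)
  show ?case
  proof (cases "W = []")
    case True then show ?thesis by simp
  next
    case False
    then have w: "is_walk E W" and e: "{last W, a} \<in> E" using snoc.prems(1) is_walk_snoc[OF False] by simp_all
    have hd: "hd W \<in> V" using snoc.prems False by simp
    have IH: "((hd W, Y), (last W, foldl (stp ins elem) Y (tl W))) \<in> (dec_edges V E ins elem)\<^sup>*"
      using snoc.IH w hd by simp
    have sW: "set W \<subseteq> V" using is_walk_set[OF w hd assms(4)] .
    have sub: "foldl (stp ins elem) Y (tl W) \<subseteq> elem ` V"
      using foldl_sub[OF _ assms(3)] sW False by (metis list.set_sel(2) subset_code(1))
    have aV: "a \<in> V" using e assms(4) by blast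
    have lV: "last W \<in> V" using sW False by auto
    have "\<And>Z. Z \<subseteq> elem ` V \<Longrightarrow> ((last W, Z), (a, stp ins elem Z a)) \<in> dec_edges V E ins elem"
      unfolding dec_edges_def dec_vertices_def stp_def using e aV lV by auto
    then have "((last W, foldl (stp ins elem) Y (tl W)), (a, stp ins elem (foldl (stp ins elem) Y (tl W)) a))
       \<in> dec_edges V E ins elem" using sub by blast
    moreover have "tl (W @ [a]) = tl W @ [a]" using False by simp
    ultimately show ?thesis using IH False by (auto intro: rtrancl_into_rtrancl)
  qed
qed

lemma proj:
  assumes "(p, q) \<in> (dec_edges V E ins elem)\<^sup>*"
  shows "\<exists>W. is_walk E W \<and> hd W = fst p \<and> last W = fst q \<and> snd q = foldl (stp ins elem) (snd p) (tl W)"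
  using assms
proof (induction rule: rtrancl_induct)
  case base
  then show ?case by (intro exI[of _ "[fst p]"]) simp
next
  case (step q r)
  then obtain W where W: "is_walk E W" "hd W = fst p" "last W = fst q"
    "snd q = foldl (stp ins elem) (snd p) (tl W)" by blast
  have ne: "W \<noteq> []" using W(1) is_walk_nonempty by blast
  from step(2) have e: "{fst q, fst r} \<in> E" and r: "snd r = stp ins elem (snd q) (fst r)"
    unfolding dec_edges_def stp_def by auto
  show ?case
    apply (intro exI[of _ "W @ [fst r]"])
    using W ne e r is_walk_snoc[OF ne] by simp
qed


lemma inv_C:
  assumes G: "event_graph V E ins elem"
    and S: "is_sink_component (dec_vertices V elem) (dec_edges V E ins elem) C"
    and wC: "(w, Y) \<in> C"
  shows "elem w \<in> Y \<longleftrightarrow> ins w"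
proof -
  let ?D = "dec_edges V E ins elem"
  have CN: "C \<subseteq> dec_vertices V elem" using S unfolding is_sink_component_def is_scc_def by blast
  then have wV: "w \<in> V" and YV: "Y \<subseteq> elem ` V" using wC unfolding dec_vertices_def by auto
  obtain a b where ab: "a \<in> V" "b \<in> V" "ins a" "\<not> ins b" "elem a = elem w" "elem b = elem w"
    using G wV unfolding event_graph_def by blast
  have "a \<noteq> b" using ab by auto
  then obtain u where u: "u \<in> V" "u \<noteq> w" using ab(1,2) by blast
  obtain P where P: "is_walk E P" "hd P = w" "last P = u" using G wV u unfolding event_graph_def by blast
  have "length P \<ge> 2"
  proof (rule ccontr)
    assume "\<not> length P \<ge> 2"
    moreover have "P \<noteq> []" using P(1) is_walk_nonempty by blast
    ultimately obtain z where "P = [z]" by (cases P; cases "tl P") auto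
    then show False using P u by simp
  qed
  then have "Suc 0 < length P" by simp
  then have "{P ! 0, P ! Suc 0} \<in> E" using P(1) unfolding is_walk_def by blast
  moreover have "P ! 0 = w" using P(2) \<open>Suc 0 < length P\<close> by (cases P) auto
  ultimately have e: "{w, P ! 1} \<in> E" by simp
  define w' where "w' = P ! 1"
  have EV: "\<forall>e\<in>E. e \<subseteq> V \<and> card e = 2" using G unfolding event_graph_def by blast
  have w'V: "w' \<in> V" using e EV w'_def by blast
  have neq: "w' \<noteq> w"
  proof
    assume "w' = w"
    then have "card {w, w'} = 2" using e EV w'_def by blast
    then show False using \<open>w' = w\<close> by simp
  qed
  have edge: "((w, Y), (w', stp ins elem Y w')) \<in> ?D"
    unfolding dec_edges_def dec_vertices_def stp_def using e w'_def wV w'V YV by auto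
  then have C': "(w', stp ins elem Y w') \<in> C" using S wC unfolding is_sink_component_def by blast
  then have "((w', stp ins elem Y w'), (w, Y)) \<in> ?D\<^sup>*" using S wC unfolding is_sink_component_def is_scc_def by blast
  then obtain c where "(c, (w, Y)) \<in> ?D"
  proof (cases rule: rtranclE)
    case base then show ?thesis using neq by simp
  next
    case (step c) then show ?thesis using that by blast
  qed
  then have "Y = stp ins elem (snd c) w" unfolding dec_edges_def stp_def by auto
  then show ?thesis unfolding stp_def by auto
qed

lemma last_app_tl: "A \<noteq> [] \<Longrightarrow> B \<noteq> [] \<Longrightarrow> last A = hd B \<Longrightarrow> last (A @ tl B) = last B"
  by (cases B) auto

lemma closed_cover:
  assumes G: "event_graph V E ins elem" and vV: "v \<in> V"
  shows "\<exists>W. is_walk E W \<and> hd W = v \<and> last W = v \<and> V \<subseteq> set W"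
proof -
  have fin: "finite V" using G unfolding event_graph_def by blast
  have conn: "\<forall>u\<in>V. \<forall>w\<in>V. \<exists>W. is_walk E W \<and> hd W = u \<and> last W = w" using G unfolding event_graph_def by blast
  have "\<forall>S. S \<subseteq> V \<longrightarrow> (\<exists>W. is_walk E W \<and> hd W = v \<and> last W = v \<and> S \<subseteq> set W)"
  proof (intro allI impI)
    fix S assume "S \<subseteq> V"
    then have "finite S" using fin finite_subset by blast
    then show "\<exists>W. is_walk E W \<and> hd W = v \<and> last W = v \<and> S \<subseteq> set W" using \<open>S \<subseteq> V\<close>
    proof (induction S rule: finite_induct)
      case empty then show ?case by (intro exI[of _ "[v]"]) simp
    next
      case (insert s S)
      then obtain W where W: "is_walk E W" "hd W = v" "last W = v" "S \<subseteq> set W" by blast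
      have sV: "s \<in> V" using insert by blast
      obtain P where P: "is_walk E P" "hd P = v" "last P = s" using conn vV sV by blast
      obtain Q where Q: "is_walk E Q" "hd Q = s" "last Q = v" using conn vV sV by blast
      have PQ: "is_walk E (P @ tl Q)" using is_walk_app[OF P(1) Q(1)] P Q by simp
      have nP: "P \<noteq> []" "Q \<noteq> []" "W \<noteq> []" using P Q W is_walk_nonempty by blast+
      have hPQ: "hd (P @ tl Q) = v" using nP P by simp
      have lPQ: "last (P @ tl Q) = v" using last_app_tl[of P Q] nP P Q by simp
      have sPQ: "s \<in> set (P @ tl Q)" using P(3) nP(1) last_in_set by fastforce
      have WW: "is_walk E (W @ tl (P @ tl Q))" using is_walk_app[OF W(1) PQ] W hPQ by simp
      have ne2: "P @ tl Q \<noteq> []" using nP by simp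
      have setW: "set (W @ tl (P @ tl Q)) = set W \<union> set (P @ tl Q)"
      proof -
        have "set (P @ tl Q) = insert (hd (P @ tl Q)) (set (tl (P @ tl Q)))" using ne2
          by (cases "P @ tl Q") auto
        moreover have "v \<in> set W" using W(3) last_in_set[OF nP(3)] by simp
        ultimately show ?thesis using hPQ by auto
      qed
      have lastW: "last (W @ tl (P @ tl Q)) = v"
        using last_app_tl[of W "P @ tl Q"] lPQ nP W hPQ ne2 by simp
      show ?case
        apply (intro exI[of _ "W @ tl (P @ tl Q)"])
        using WW W nP setW sPQ lastW insert by auto
    qed
  qed
  then show ?thesis by blast
qed


lemma sink_closed:
  assumes S: "is_sink_component N D C" and "(p, q) \<in> D\<^sup>*" "p \<in> C"
  shows "q \<in> C"
  using assms(2,3)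
  by (induction rule: rtrancl_induct) (use S in \<open>auto simp: is_sink_component_def\<close>)

theorem mainTheorem3:
  fixes V :: "'v set" and E :: "'v set set" and ins :: "'v \<Rightarrow> bool" and elem :: "'v \<Rightarrow> 'u"
    and C :: "('v \<times> 'u set) set"
  assumes "event_graph V E ins elem"
    and "is_sink_component (dec_vertices V elem) (dec_edges V E ins elem) C"
    and "v \<in> V" and "X \<subseteq> elem ` V"
  shows "(v, X) \<in> C \<longleftrightarrow>
    (\<exists>W. is_walk E W \<and> hd W = v \<and> last W = v \<and>
       (\<forall>x\<in>elem ` V. \<exists>i<length W. elem (W ! i) = x) \<and>
       (\<forall>x\<in>elem ` V. x \<in> X \<longleftrightarrow>
          (\<exists>i<length W. elem (W ! i) = x \<and> ins (W ! i) \<and>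
             (\<forall>j. i < j \<and> j < length W \<longrightarrow> elem (W ! j) \<noteq> x))))"
proof -
  note G = assms(1) and S = assms(2) and vV = assms(3) and XV = assms(4)
  let ?D = "dec_edges V E ins elem"
  let ?f = "foldl (stp ins elem)"
  have EV: "\<forall>e\<in>E. e \<subseteq> V" using G unfolding event_graph_def by blast
  have CN: "C \<subseteq> dec_vertices V elem" using S unfolding is_sink_component_def is_scc_def by blast
  have conn: "\<forall>u\<in>V. \<forall>w\<in>V. \<exists>W. is_walk E W \<and> hd W = u \<and> last W = w" using G unfolding event_graph_def by blast
  show ?thesis
  proof
    assume vX: "(v, X) \<in> C"
    obtain W0 where W0: "is_walk E W0" "hd W0 = v" "last W0 = v" "V \<subseteq> set W0"
      using closed_cover[OF G vV] by blast
    have "((v, X), (v, ?f X (tl W0))) \<in> ?D\<^sup>*" using sim[OF W0(1) _ XV EV] W0 vV by simp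
    then have vZ: "(v, ?f X (tl W0)) \<in> C" using sink_closed[OF S] vX by blast
    then have "((v, ?f X (tl W0)), (v, X)) \<in> ?D\<^sup>*" using S vX unfolding is_sink_component_def is_scc_def by blast
    from proj[OF this] obtain W1 where W1: "is_walk E W1" "hd W1 = v" "last W1 = v" "X = ?f (?f X (tl W0)) (tl W1)"
      unfolding fst_conv snd_conv by blast
    define W where "W = W0 @ tl W1"
    have ne: "W0 \<noteq> []" "W1 \<noteq> []" using W0 W1 is_walk_nonempty by blast+
    have wW: "is_walk E W" unfolding W_def using is_walk_app[OF W0(1) W1(1)] W0 W1 by simp
    have hW: "hd W = v" unfolding W_def using W0 ne by simp
    have lW: "last W = v" unfolding W_def using W0 W1 ne
      using last_app_tl[of W0 W1] by simp
    have sW: "V \<subseteq> set W" unfolding W_def using W0 by auto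
    have tlW: "tl W = tl W0 @ tl W1" unfolding W_def using ne by simp
    have "?f X (tl W) = ?f (?f X (tl W0)) (tl W1)" unfolding tlW by simp
    then have XW: "X = ?f X (tl W)" using trans[OF W1(4)] by metis
    have "W \<noteq> []" using wW is_walk_nonempty by blast
    then have Wc: "W = v # tl W" using hW by (cases W) auto
    have cov: "\<forall>x\<in>elem ` V. \<exists>i<length W. elem (W ! i) = x"
    proof
      fix x assume "x \<in> elem ` V"
      then obtain u where u: "u \<in> V" "x = elem u" by blast
      then have "u \<in> set W" using sW by blast
      then obtain i where "i < length W" "W ! i = u" by (auto simp: in_set_conv_nth)
      then show "\<exists>i<length W. elem (W ! i) = x" using u by blast
    qed
    have invv: "elem v \<in> X \<longleftrightarrow> ins v" using inv_C[OF G S vX] .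
    have L0: "\<forall>x\<in>elem ` V. x \<in> X \<longleftrightarrow> lastins ins elem W x"
    proof
      fix x assume "x \<in> elem ` V"
      then have "covered elem W x" using cov unfolding covered_def by blast
      then show "x \<in> X \<longleftrightarrow> lastins ins elem W x"
        using run_char[of elem v X ins x "tl W", OF invv] Wc[symmetric] XW[symmetric] by simp
    qed
    show "\<exists>W. is_walk E W \<and> hd W = v \<and> last W = v \<and>
       (\<forall>x\<in>elem ` V. \<exists>i<length W. elem (W ! i) = x) \<and>
       (\<forall>x\<in>elem ` V. x \<in> X \<longleftrightarrow>
          (\<exists>i<length W. elem (W ! i) = x \<and> ins (W ! i) \<and>
             (\<forall>j. i < j \<and> j < length W \<longrightarrow> elem (W ! j) \<noteq> x)))"
    proof -
      have L: "\<forall>x\<in>elem ` V. x \<in> X \<longleftrightarrow> (\<exists>i<length W. elem (W ! i) = x \<and> ins (W ! i) \<and>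
             (\<forall>j. i < j \<and> j < length W \<longrightarrow> elem (W ! j) \<noteq> x))"
        using L0 unfolding lastins_def .
      show ?thesis by (rule exI[of _ W]) (intro conjI wW hW lW cov L)
    qed
  next
    assume "\<exists>W. is_walk E W \<and> hd W = v \<and> last W = v \<and>
       (\<forall>x\<in>elem ` V. \<exists>i<length W. elem (W ! i) = x) \<and>
       (\<forall>x\<in>elem ` V. x \<in> X \<longleftrightarrow>
          (\<exists>i<length W. elem (W ! i) = x \<and> ins (W ! i) \<and>
             (\<forall>j. i < j \<and> j < length W \<longrightarrow> elem (W ! j) \<noteq> x)))"
    then obtain W where W0: "is_walk E W" "hd W = v" "last W = v"
       "\<forall>x\<in>elem ` V. \<exists>i<length W. elem (W ! i) = x"
       "\<forall>x\<in>elem ` V. x \<in> X \<longleftrightarrow>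
          (\<exists>i<length W. elem (W ! i) = x \<and> ins (W ! i) \<and>
             (\<forall>j. i < j \<and> j < length W \<longrightarrow> elem (W ! j) \<noteq> x))"
      by blast
    have W4: "\<forall>x\<in>elem ` V. covered elem W x" using W0(4) unfolding covered_def .
    have W5: "\<forall>x\<in>elem ` V. x \<in> X \<longleftrightarrow> lastins ins elem W x" using W0(5) unfolding lastins_def .
    note W = W0(1-3) W4 W5
    have "C \<noteq> {}" using S unfolding is_sink_component_def is_scc_def by blast
    then obtain p where "p \<in> C" by blast
    then obtain u Y where uY: "(u, Y) \<in> C" by (cases p) blast
    have uV: "u \<in> V" and YV: "Y \<subseteq> elem ` V" using uY CN unfolding dec_vertices_def by auto
    obtain P where P: "is_walk E P" "hd P = u" "last P = v" using conn uV vV by blast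
    have "((u, Y), (v, ?f Y (tl P))) \<in> ?D\<^sup>*" using sim[OF P(1) _ YV EV] P uV by simp
    then have C1: "(v, ?f Y (tl P)) \<in> C" using sink_closed[OF S] uY by blast
    define Y' where "Y' = ?f Y (tl P)"
    have Y'V: "Y' \<subseteq> elem ` V" using C1 CN unfolding Y'_def dec_vertices_def by auto
    have "((v, Y'), (v, ?f Y' (tl W))) \<in> ?D\<^sup>*" using sim[OF W(1) _ Y'V EV] W(2,3) vV by simp
    then have C2: "(v, ?f Y' (tl W)) \<in> C" using sink_closed[OF S] C1 unfolding Y'_def by blast
    have ZV: "?f Y' (tl W) \<subseteq> elem ` V" using C2 CN unfolding dec_vertices_def by auto
    have invv: "elem v \<in> Y' \<longleftrightarrow> ins v" using inv_C[OF G S C1] unfolding Y'_def .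
    have "W \<noteq> []" using W(1) is_walk_nonempty by blast
    then have Wc: "W = v # tl W" using W(2) by (cases W) auto
    have "\<forall>x\<in>elem ` V. x \<in> ?f Y' (tl W) \<longleftrightarrow> x \<in> X"
    proof
      fix x assume x: "x \<in> elem ` V"
      show "x \<in> ?f Y' (tl W) \<longleftrightarrow> x \<in> X"
      proof -
        have c: "covered elem W x" using W(4) x by blast
        have l: "x \<in> X \<longleftrightarrow> lastins ins elem W x" using W(5) x by blast
        show ?thesis using run_char[of elem v Y' ins x "tl W", OF invv] Wc[symmetric] c l by simp
      qed
    qed
    then have "?f Y' (tl W) = X" using ZV XV by blast
    then show "(v, X) \<in> C" using C2 by simp
  qed
qed

end
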